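(* Consider a single agent with $m$ actions and unknown utility vector $\mathbf{u}\in[0,1]^m$, interacting with a principal over $T$ rounds in the no-regret model (with a single signal), and let $\mathcal{P}=\{\mathbf{p}\in[0,2]^m:\langle\mathbf{1},\mathbf{p}\rangle=m\}$. Consider the principal algorithm: set $\mathbf{p}^1=\mathbf{1}$; for $t=1,\dots,T$, pay according to $\mathbf{p}^t$, observe the agent's action $a^t$, and set $\mathbf{p}^{t+1}=\Pi_{\mathcal{P}}[\mathbf{p}^t-\eta\mathbf{e}_{a^t}]$ with $\eta=\sqrt{m/T}$; finally output $-\frac1T\sum_{t=1}^T\mathbf{p}^t$. This algorithm $\varepsilon$-learns any single-agent game using $\mathcal{O}(m^3+C^2m^2)/\varepsilon^2$ rounds.
   Context: In each round $t$ the principal chooses a payment vector $\mathbf{p}^t\in\mathbb{R}_+^m$, the agent's utility that round is $\mathbf{u}+\mathbf{p}^t$, the agent plays an action $a^t\in[m]$ and the principal observes it. No-regret model: for every $t\le T$, $\max_{a}\sum_{\tau\le t}\big[(\mathbf{u}+\mathbf{p}^\tau)[a]-(\mathbf{u}+\mathbf{p}^\tau)[a^\tau]\big]\le C\sqrt{T}$, for a constant $C$ (at most polynomial in $m$). $\Pi_{\mathcal{P}}$ is Euclidean projection onto $\mathcal{P}$, $\mathbf{e}_a$ is the $a$-th unit vector. The principal $\varepsilon$-learns the game if its output $\tilde{\mathbf{u}}$ satisfies $|\mathbf{u}[a]+W-\tilde{\mathbf{u}}[a]|\le\varepsilon$ for all $a$ for some constant $W\in\mathbb{R}$. *)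

theory Defs
  imports "HOL-Analysis.Analysis"
begin

text \<open>Vectors in R^m are represented as functions nat => real; only the
coordinates i < m are meaningful, the others are normalised to 0.\<close>

definition payset :: "nat \<Rightarrow> (nat \<Rightarrow> real) set" where
  "payset m = {p. (\<forall>i<m. 0 \<le> p i \<and> p i \<le> 2) \<and> (\<forall>i\<ge>m. p i = 0)
                  \<and> (\<Sum>i<m. p i) = real m}"

definition sqdist :: "nat \<Rightarrow> (nat \<Rightarrow> real) \<Rightarrow> (nat \<Rightarrow> real) \<Rightarrow> real" where
  "sqdist m x y = (\<Sum>i<m. (x i - y i)^2)"

definition proj :: "nat \<Rightarrow> (nat \<Rightarrow> real) \<Rightarrow> (nat \<Rightarrow> real)" where
  "proj m x = (SOME y. y \<in> payset m \<and> (\<forall>z\<in>payset m. sqdist m x y \<le> sqdist m x z))"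

definition unitvec :: "nat \<Rightarrow> nat \<Rightarrow> nat \<Rightarrow> real" where
  "unitvec m a = (\<lambda>i. if i = a \<and> i < m then 1 else 0)"

definition ones :: "nat \<Rightarrow> nat \<Rightarrow> real" where
  "ones m = (\<lambda>i. if i < m then 1 else 0)"

text \<open>pay m eta act t is the payment vector of round t+1 (rounds 1..T are indexed
0..T-1); act t is the agent's action in round t+1.\<close>
fun pay :: "nat \<Rightarrow> real \<Rightarrow> (nat \<Rightarrow> nat) \<Rightarrow> nat \<Rightarrow> (nat \<Rightarrow> real)" where
  "pay m eta act 0 = ones m"
| "pay m eta act (Suc t) = proj m (\<lambda>i. pay m eta act t i - eta * unitvec m (act t) i)"

definition principal_output :: "nat \<Rightarrow> nat \<Rightarrow> (nat \<Rightarrow> nat) \<Rightarrow> nat \<Rightarrow> real" where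
  "principal_output m T act = (\<lambda>i. - (1 / real T) * (\<Sum>t<T. pay m (sqrt (real m / real T)) act t i))"

definition no_regret :: "nat \<Rightarrow> (nat \<Rightarrow> real) \<Rightarrow> real \<Rightarrow> nat \<Rightarrow> (nat \<Rightarrow> nat) \<Rightarrow> bool" where
  "no_regret m u C T act =
     (\<forall>t\<le>T. \<forall>b<m.
        (\<Sum>\<tau><t. (u b + pay m (sqrt (real m / real T)) act \<tau> b)
                - (u (act \<tau>) + pay m (sqrt (real m / real T)) act \<tau> (act \<tau>)))
        \<le> C * sqrt (real T))"

definition eps_learns :: "nat \<Rightarrow> (nat \<Rightarrow> real) \<Rightarrow> real \<Rightarrow> (nat \<Rightarrow> real) \<Rightarrow> bool" where
  "eps_learns m u \<epsilon> ut = (\<exists>W::real. \<forall>a<m. \<bar>u a + W - ut a\<bar> \<le> \<epsilon>)"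

end

theory Submission
  imports Defs
begin

lemma clamp_term:
  fixes x l z :: real
  assumes "0 \<le> z" "z \<le> 2"
  shows "(x - l - max 0 (min 2 (x - l))) * (max 0 (min 2 (x - l)) - z) \<ge> 0"
proof (cases "x - l \<le> 0")
  case True
  then show ?thesis using assms by (simp add: mult_nonpos_nonneg)
next
  case False
  then show ?thesis using assms by (cases "x - l \<le> 2") auto
qed

lemma proj_var:
  assumes m: "m \<ge> 1"
  shows "\<exists>y\<in>payset m. \<forall>z\<in>payset m. sqdist m x z \<ge> sqdist m x y + sqdist m y z"
proof -
  define f where "f = (\<lambda>l. \<Sum>i<m. max 0 (min 2 (x i - l)))"
  define B where "B = (\<Sum>i<m. \<bar>x i\<bar>)"
  have xb: "\<bar>x i\<bar> \<le> B" if "i < m" for i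
    unfolding B_def using that by (intro member_le_sum) auto
  have fB: "f B = 0" unfolding f_def
    by (rule sum.neutral) (use xb in force)
  have fa: "f (- B - 2) = 2 * real m" unfolding f_def
  proof -
    have "(\<Sum>i<m. max 0 (min 2 (x i - (- B - 2)))) = (\<Sum>i<m. (2::real))"
      by (rule sum.cong) (use xb in force)+
    then show "(\<Sum>i<m. max 0 (min 2 (x i - (- B - 2)))) = 2 * real m" by simp
  qed
  have B0: "B \<ge> 0" unfolding B_def by (simp add: sum_nonneg)
  have cont: "isCont f l" for l unfolding f_def by (intro continuous_intros)
  obtain l where l: "f l = real m"
    using IVT2[of f B "real m" "- B - 2"] fB fa B0 cont by auto
  define y where "y = (\<lambda>i. if i < m then max 0 (min 2 (x i - l)) else 0)"
  have ysum: "(\<Sum>i<m. y i) = real m" using l unfolding f_def y_def by simp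
  have yP: "y \<in> payset m" unfolding payset_def using ysum by (auto simp: y_def)
  show ?thesis
  proof (intro bexI[OF _ yP] ballI)
    fix z assume z: "z \<in> payset m"
    have zb: "0 \<le> z i" "z i \<le> 2" if "i < m" for i using z that by (auto simp: payset_def)
    have zsum: "(\<Sum>i<m. z i) = real m" using z by (auto simp: payset_def)
    have e: "sqdist m x z = sqdist m x y + sqdist m y z + 2 * (\<Sum>i<m. (x i - y i) * (y i - z i))"
      unfolding sqdist_def
      by (simp add: sum.distrib[symmetric] sum_distrib_left power2_eq_square algebra_simps)
    have s1: "(\<Sum>i<m. (x i - y i) * (y i - z i)) = (\<Sum>i<m. (x i - l - y i) * (y i - z i)) + l * ((\<Sum>i<m. y i) - (\<Sum>i<m. z i))"
      by (simp add: sum.distrib[symmetric] sum_distrib_left sum_subtractf[symmetric] algebra_simps)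
    have s2: "(\<Sum>i<m. (x i - l - y i) * (y i - z i)) \<ge> 0"
      by (rule sum_nonneg) (simp add: y_def clamp_term zb)
    show "sqdist m x z \<ge> sqdist m x y + sqdist m y z"
      using e s1 s2 ysum zsum by simp
  qed
qed

lemma sqdist_nonneg: "sqdist m x y \<ge> 0"
  unfolding sqdist_def by (simp add: sum_nonneg)

lemma proj_prop:
  assumes m: "m \<ge> 1" and z: "z \<in> payset m"
  shows "proj m x \<in> payset m \<and> sqdist m (proj m x) z \<le> sqdist m x z"
proof -
  obtain y where y: "y \<in> payset m" and yv: "\<And>z. z \<in> payset m \<Longrightarrow> sqdist m x z \<ge> sqdist m x y + sqdist m y z"
    using proj_var[OF m] by blast
  have ymin: "y \<in> payset m \<and> (\<forall>z\<in>payset m. sqdist m x y \<le> sqdist m x z)"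
    using y yv sqdist_nonneg by (smt (verit))
  define y' where "y' = proj m x"
  have y': "y' \<in> payset m \<and> (\<forall>z\<in>payset m. sqdist m x y' \<le> sqdist m x z)"
    unfolding y'_def proj_def by (rule someI[of _ y]) (rule ymin)
  have "sqdist m y y' \<le> 0" using y' yv[of y'] ymin by auto
  hence "sqdist m y y' = 0" using sqdist_nonneg[of m y y'] by linarith
  hence "\<forall>i\<in>{..<m}. (y i - y' i)^2 = 0"
    unfolding sqdist_def by (subst sum_nonneg_eq_0_iff[symmetric]) auto
  hence eq: "\<And>i. i < m \<Longrightarrow> y' i = y i" by auto
  have "sqdist m y' z = sqdist m y z" unfolding sqdist_def by (rule sum.cong) (auto simp: eq)
  then show ?thesis using y' yv[OF z] sqdist_nonneg[of m x y] unfolding y'_def by auto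
qed

lemma ones_in: "ones m \<in> payset m"
  unfolding payset_def ones_def by auto

lemma pay_in: "m \<ge> 1 \<Longrightarrow> pay m eta act t \<in> payset m"
  by (induction t) (auto simp: ones_in proj_prop[OF _ ones_in])

lemma step_eq:
  assumes "a < m"
  shows "sqdist m (\<lambda>i. p i - eta * unitvec m a i) q = sqdist m p q - 2 * eta * (p a - q a) + eta^2"
proof -
  have "sqdist m (\<lambda>i. p i - eta * unitvec m a i) q
      = (\<Sum>i<m. (p i - q i)^2 - 2 * eta * (if i = a then p i - q i else 0) + (if i = a then eta^2 else 0))"
    unfolding sqdist_def unitvec_def
    by (rule sum.cong) (auto simp: power2_eq_square algebra_simps)
  also have "\<dots> = sqdist m p q - 2 * eta * (p a - q a) + eta^2"
    using assms by (simp add: sum.distrib sum_subtractf sqdist_def sum_distrib_left[symmetric])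
  finally show ?thesis .
qed

lemma ogd:
  assumes m: "m \<ge> 1" and q: "q \<in> payset m"
  shows "(\<forall>t<n. act t < m) \<Longrightarrow>
    2 * eta * (\<Sum>t<n. pay m eta act t (act t) - q (act t))
      \<le> sqdist m (ones m) q - sqdist m (pay m eta act n) q + real n * eta^2"
proof (induction n)
  case 0 then show ?case by simp
next
  case (Suc n)
  have a: "act n < m" using Suc.prems by auto
  have "sqdist m (pay m eta act (Suc n)) q \<le> sqdist m (\<lambda>i. pay m eta act n i - eta * unitvec m (act n) i) q"
    using proj_prop[OF m q] by simp
  also have "\<dots> = sqdist m (pay m eta act n) q - 2 * eta * (pay m eta act n (act n) - q (act n)) + eta^2"
    by (rule step_eq[OF a])
  finally show ?case using Suc by (simp add: algebra_simps)
qed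

lemma ones_dist: assumes "q \<in> payset m" shows "sqdist m (ones m) q \<le> real m"
proof -
  have "sqdist m (ones m) q \<le> (\<Sum>i<m. (1::real))"
    unfolding sqdist_def
  proof (rule sum_mono)
    fix i assume "i \<in> {..<m}"
    hence "0 \<le> q i" "q i \<le> 2" using assms by (auto simp: payset_def)
    have "(1 - q i)^2 = 1 - q i * (2 - q i)" by (simp add: power2_eq_square algebra_simps)
    moreover have "q i * (2 - q i) \<ge> 0" using \<open>0 \<le> q i\<close> \<open>q i \<le> 2\<close> by simp
    ultimately show "(ones m i - q i)^2 \<le> 1" using \<open>i \<in> {..<m}\<close> unfolding ones_def by simp
  qed
  thus ?thesis by simp
qed

theorem theorem5p2:
  shows "\<exists>K>0. \<forall>(m::nat) (u::nat \<Rightarrow> real) (C::real) (\<epsilon>::real) (T::nat) (act::nat \<Rightarrow> nat).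
     m \<ge> 1 \<longrightarrow> (\<forall>i<m. 0 \<le> u i \<and> u i \<le> 1) \<longrightarrow> C \<ge> 0 \<longrightarrow> \<epsilon> > 0 \<longrightarrow> T \<ge> 1 \<longrightarrow>
     real T \<ge> K * (real m ^ 3 + C^2 * real m ^ 2) / \<epsilon>^2 \<longrightarrow>
     (\<forall>t<T. act t < m) \<longrightarrow> no_regret m u C T act \<longrightarrow>
     eps_learns m u \<epsilon> (principal_output m T act)"

proof (rule exI[of _ 2], rule conjI, simp, intro allI impI)
  fix m :: nat and u :: "nat \<Rightarrow> real" and C \<epsilon> :: real and T :: nat and act :: "nat \<Rightarrow> nat"
  assume m: "m \<ge> 1" and u: "\<forall>i<m. 0 \<le> u i \<and> u i \<le> 1" and C: "C \<ge> 0" and e: "\<epsilon> > 0"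
    and T: "T \<ge> 1" and TK: "real T \<ge> 2 * (real m ^ 3 + C^2 * real m ^ 2) / \<epsilon>^2"
    and act: "\<forall>t<T. act t < m" and nr: "no_regret m u C T act"
  define eta where "eta = sqrt (real m / real T)"
  define p where "p = pay m eta act"
  define U where "U = (\<Sum>i<m. u i)"
  define ub where "ub = U / real m"
  define A where "A = 1 + ub"
  define q where "q = (\<lambda>i. if i < m then 1 - u i + ub else 0)"
  define P where "P = (\<lambda>b. \<Sum>t<T. p t b)"
  define S where "S = (\<Sum>t<T. u (act t) + p t (act t))"
  define D where "D = C * sqrt (real T) + sqrt (real m) * sqrt (real T)"
  have mpos: "real m > 0" using m by simp
  have Tpos: "real T > 0" using T by simp
  have U0: "U \<ge> 0" unfolding U_def using u by (intro sum_nonneg) auto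
  have U1: "U \<le> real m" proof -
    have "U \<le> (\<Sum>i<m. (1::real))" unfolding U_def by (rule sum_mono) (use u in auto)
    thus ?thesis by simp qed
  have ub0: "0 \<le> ub" "ub \<le> 1" unfolding ub_def using U0 U1 mpos by (auto simp: field_simps)
  have qsum: "(\<Sum>i<m. q i) = real m"
  proof -
    have "(\<Sum>i<m. q i) = (\<Sum>i<m. 1 - u i + ub)" unfolding q_def by simp
    also have "\<dots> = real m - U + real m * ub" unfolding U_def by (simp add: sum.distrib sum_subtractf)
    also have "\<dots> = real m" unfolding ub_def using mpos by simp
    finally show ?thesis .
  qed
  have qP: "q \<in> payset m" unfolding payset_def using qsum u ub0 by (auto simp: q_def)
  have pP: "\<And>t. p t \<in> payset m" unfolding p_def using pay_in[OF m] by blast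
  define R where "R = (\<Sum>t<T. p t (act t) - q (act t))"
  have og: "2 * eta * R \<le> real m + real T * eta^2"
    using ogd[OF m qP act, of eta] ones_dist[OF qP] sqdist_nonneg[of m "pay m eta act T" q]
    unfolding R_def p_def by linarith
  have eta2: "eta^2 = real m / real T" unfolding eta_def using mpos Tpos by simp
  have etapos: "eta > 0" unfolding eta_def using mpos Tpos by simp
  have etam: "eta * (sqrt (real m) * sqrt (real T)) = real m"
    unfolding eta_def using mpos Tpos by (simp add: real_sqrt_mult[symmetric])
  have "eta * R \<le> real m" using og eta2 Tpos by (simp add: field_simps)
  hence Rb: "R \<le> sqrt (real m) * sqrt (real T)" using etam etapos
    by (metis mult_le_cancel_left_pos)
  have Sq: "S = (\<Sum>t<T. u (act t) + q (act t)) + R"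
    unfolding S_def R_def by (simp add: sum.distrib[symmetric] sum_subtractf[symmetric])
  have "(\<Sum>t<T. u (act t) + q (act t)) = (\<Sum>t<T. A)"
    by (rule sum.cong) (use act in \<open>auto simp: q_def A_def\<close>)
  hence Sb: "S \<le> real T * A + sqrt (real m) * sqrt (real T)" using Sq Rb by simp
  have up: "real T * u b + P b \<le> real T * A + D" if b: "b < m" for b
  proof -
    have "(\<Sum>\<tau><T. (u b + p \<tau> b) - (u (act \<tau>) + p \<tau> (act \<tau>))) \<le> C * sqrt (real T)"
      using nr b unfolding no_regret_def p_def eta_def by auto
    moreover have "(\<Sum>\<tau><T. (u b + p \<tau> b) - (u (act \<tau>) + p \<tau> (act \<tau>))) = real T * u b + P b - S"
      unfolding P_def S_def by (simp add: sum_subtractf sum.distrib)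
    ultimately show ?thesis using Sb unfolding D_def by linarith
  qed
  have tot: "(\<Sum>b<m. real T * u b + P b) = real T * real m * A"
  proof -
    have "(\<Sum>b<m. P b) = (\<Sum>t<T. \<Sum>b<m. p t b)" unfolding P_def by (rule sum.swap)
    also have "\<dots> = (\<Sum>t<T. real m)" using pP by (simp add: payset_def)
    finally have "(\<Sum>b<m. P b) = real T * real m" by simp
    moreover have "(\<Sum>b<m. real T * u b) = real T * U" unfolding U_def by (simp add: sum_distrib_left)
    ultimately show ?thesis unfolding A_def ub_def using mpos by (simp add: sum.distrib field_simps)
  qed
  have D0: "D \<ge> 0" unfolding D_def using C by simp
  have lo: "real T * u b + P b \<ge> real T * A - real m * D" if b: "b < m" for b
  proof -
    have "(\<Sum>c\<in>{..<m} - {b}. real T * u c + P c) \<le> real (card ({..<m} - {b})) * (real T * A + D)"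
      by (rule sum_bounded_above) (use up in auto)
    also have "card ({..<m} - {b}) = m - 1" using b by simp
    finally have h: "(\<Sum>c\<in>{..<m} - {b}. real T * u c + P c) \<le> real (m - 1) * (real T * A + D)" .
    have "(\<Sum>b<m. real T * u b + P b) = (real T * u b + P b) + (\<Sum>c\<in>{..<m} - {b}. real T * u c + P c)"
      using b by (simp add: sum.remove)
    hence "real T * u b + P b \<ge> real T * real m * A - real (m - 1) * (real T * A + D)" using tot h by linarith
    moreover have "real (m - 1) = real m - 1" using m by simp
    ultimately show ?thesis using D0 by (simp add: algebra_simps)
  qed
  have fin: "real m * D \<le> \<epsilon> * real T"
  proof -
    have sq: "(sqrt (real m) + C)^2 \<le> 2 * (real m + C^2)"
    proof -
      have "(sqrt (real m))^2 = real m" using mpos by simp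
      moreover have gen: "(s + c)^2 \<le> 2*(s^2 + c^2)" for s c :: real
      proof -
        have "0 \<le> (s-c)^2" by simp
        thus ?thesis by (simp add: power2_eq_square algebra_simps)
      qed
      ultimately show ?thesis by (metis gen)
    qed
    have "(real m * (sqrt (real m) + C))^2 = (real m)^2 * (sqrt (real m) + C)^2" by (simp add: power_mult_distrib)
    also have "\<dots> \<le> (real m)^2 * (2 * (real m + C^2))" using sq by (simp add: mult_left_mono)
    also have "\<dots> = 2 * (real m ^ 3 + C^2 * real m ^ 2)" by (simp add: power2_eq_square power3_eq_cube algebra_simps)
    also have "\<dots> \<le> \<epsilon>^2 * real T" using TK e by (simp add: field_simps)
    also have "\<dots> = (\<epsilon> * sqrt (real T))^2" using Tpos by (simp add: power_mult_distrib)
    finally have sq2: "(real m * (sqrt (real m) + C))^2 \<le> (\<epsilon> * sqrt (real T))^2" .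
    have "0 \<le> \<epsilon> * sqrt (real T)" using e Tpos by simp
    from power2_le_imp_le[OF sq2 this]
    have h: "real m * (sqrt (real m) + C) \<le> \<epsilon> * sqrt (real T)" .
    have st: "sqrt (real T) \<ge> 0" by simp
    have "real m * D = real m * (sqrt (real m) + C) * sqrt (real T)" unfolding D_def by (simp add: algebra_simps)
    also have "\<dots> \<le> \<epsilon> * sqrt (real T) * sqrt (real T)"
      using mult_right_mono[OF h st] .
    also have "\<dots> = \<epsilon> * real T" using Tpos by (simp add: mult.assoc)
    finally show ?thesis .
  qed
  show "eps_learns m u \<epsilon> (principal_output m T act)"
    unfolding eps_learns_def
  proof (intro exI[of _ "- A"] allI impI)
    fix a assume a: "a < m"
    have po: "principal_output m T act a = - (P a / real T)"
      unfolding principal_output_def P_def p_def eta_def by simp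
    have "u a + - A - principal_output m T act a = (real T * u a + P a - real T * A) / real T"
      unfolding po using Tpos by (simp add: diff_divide_distrib add_divide_distrib)
    moreover have "\<bar>real T * u a + P a - real T * A\<bar> \<le> \<epsilon> * real T"
    proof -
      have "1 * D \<le> real m * D" using D0 m by (intro mult_right_mono) auto
      thus ?thesis using up[OF a] lo[OF a] fin by (simp add: abs_le_iff)
    qed
    ultimately show "\<bar>u a + - A - principal_output m T act a\<bar> \<le> \<epsilon>"
      using Tpos by (simp add: divide_le_eq)
  qed
qed

end
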